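(* Let $\mathsf M$ be an oriented matroid with tope-pairs poset $\mathcal Q$, and let $\rho:\mathcal Q\to\mathcal Q$, $\rho(R,T)=(-T,R)$. Then $n\mapsto\rho^n$ defines an action of $\mathbb Z_4$ on the order complex $\Delta(\mathcal Q)$ by simplicial automorphisms, and hence a simplicial action of $\mathbb Z_4$ on $|\mathcal Q|$.
   Context: Topes of an oriented matroid on ground set $E$ are its maximal covectors, sign vectors in $\{+,-,0\}^E$; $-T$ is componentwise negation. The separating set is $S(X,Y)=\{e\in E: X_e=-Y_e\neq0\}$; for a tope $B$, $T\le_B R$ iff $S(B,T)\subseteq S(B,R)$. The tope-pairs poset $\mathcal Q$ is $\mathcal T\times\mathcal T$ ($\mathcal T$ the set of topes) with $(T,R)\le(T',R')$ iff $T\le_{T'}R\le_{T'}R'$. $\Delta(\mathcal Q)$ is the abstract simplicial complex whose simplices are the chains of $\mathcal Q$, and $|\mathcal Q|$ is its geometric realization. *)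

theory Defs
  imports Main
begin

datatype sign = Pos | Neg | Zero

fun neg_sign :: "sign \<Rightarrow> sign" where
  "neg_sign Pos = Neg" | "neg_sign Neg = Pos" | "neg_sign Zero = Zero"

type_synonym 'e signvec = "'e \<Rightarrow> sign"

definition zero_sv :: "'e signvec" where
  "zero_sv = (\<lambda>e. Zero)"

definition neg_sv :: "'e signvec \<Rightarrow> 'e signvec" where
  "neg_sv X = (\<lambda>e. neg_sign (X e))"

definition comp_sv :: "'e signvec \<Rightarrow> 'e signvec \<Rightarrow> 'e signvec" where
  "comp_sv X Y = (\<lambda>e. if X e \<noteq> Zero then X e else Y e)"

definition sep :: "'e signvec \<Rightarrow> 'e signvec \<Rightarrow> 'e set" where
  "sep X Y = {e. X e = neg_sign (Y e) \<and> X e \<noteq> Zero}"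

definition conf_le :: "'e signvec \<Rightarrow> 'e signvec \<Rightarrow> bool" where
  "conf_le X Y \<longleftrightarrow> (\<forall>e. X e = Zero \<or> X e = Y e)"

text \<open>Covector axioms of an oriented matroid on a finite ground set.\<close>
definition oriented_matroid :: "('e::finite) signvec set \<Rightarrow> bool" where
  "oriented_matroid L \<longleftrightarrow>
     zero_sv \<in> L \<and>
     (\<forall>X\<in>L. neg_sv X \<in> L) \<and>
     (\<forall>X\<in>L. \<forall>Y\<in>L. comp_sv X Y \<in> L) \<and>
     (\<forall>X\<in>L. \<forall>Y\<in>L. \<forall>e\<in>sep X Y. \<exists>Z\<in>L. Z e = Zero \<and>
         (\<forall>f. f \<notin> sep X Y \<longrightarrow> Z f = comp_sv X Y f))"

definition topes :: "'e signvec set \<Rightarrow> 'e signvec set" where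
  "topes L = {T\<in>L. \<forall>Y\<in>L. conf_le T Y \<longrightarrow> Y = T}"

definition tope_le :: "'e signvec \<Rightarrow> 'e signvec \<Rightarrow> 'e signvec \<Rightarrow> bool" where
  "tope_le B T R \<longleftrightarrow> sep B T \<subseteq> sep B R"

definition tope_pairs :: "'e signvec set \<Rightarrow> ('e signvec \<times> 'e signvec) set" where
  "tope_pairs L = topes L \<times> topes L"

definition tp_le :: "('e signvec \<times> 'e signvec) \<Rightarrow> ('e signvec \<times> 'e signvec) \<Rightarrow> bool" where
  "tp_le p q \<longleftrightarrow> tope_le (fst q) (fst p) (snd p) \<and> tope_le (fst q) (snd p) (snd q)"

definition order_complex :: "'a set \<Rightarrow> ('a \<Rightarrow> 'a \<Rightarrow> bool) \<Rightarrow> 'a set set" where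
  "order_complex V le = {C. C \<subseteq> V \<and> finite C \<and> C \<noteq> {} \<and>
                            (\<forall>x\<in>C. \<forall>y\<in>C. le x y \<or> le y x)}"

definition simplicial_automorphism :: "'a set \<Rightarrow> 'a set set \<Rightarrow> ('a \<Rightarrow> 'a) \<Rightarrow> bool" where
  "simplicial_automorphism V K f \<longleftrightarrow>
     bij_betw f V V \<and> (\<forall>S. S \<subseteq> V \<longrightarrow> (S \<in> K \<longleftrightarrow> f ` S \<in> K))"

definition rho :: "('e signvec \<times> 'e signvec) \<Rightarrow> ('e signvec \<times> 'e signvec)" where
  "rho p = (neg_sv (snd p), fst p)"

definition rho_act :: "int \<Rightarrow> ('e signvec \<times> 'e signvec) \<Rightarrow> ('e signvec \<times> 'e signvec)" where
  "rho_act n = rho ^^ nat (n mod 4)"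

end

theory Submission
  imports Defs
begin

lemma neg_sign_inv[simp]: "neg_sign (neg_sign x) = x"
  by (cases x) auto

lemma neg_sv_inv[simp]: "neg_sv (neg_sv X) = X"
  by (simp add: neg_sv_def fun_eq_iff)

lemma rho4: "rho ^^ 4 = id"
  by (simp add: fun_eq_iff rho_def numeral_eq_Suc)

lemma rho_mod: "rho ^^ n = rho ^^ (n mod 4)"
proof -
  have e: "rho ^^ (4 * (n div 4)) = id" by (metis funpow_mult rho4 id_funpow)
  have "rho ^^ n = rho ^^ (n mod 4 + 4 * (n div 4))" by simp
  also have "\<dots> = rho ^^ (n mod 4) \<circ> rho ^^ (4 * (n div 4))" by (rule funpow_add)
  also have "\<dots> = rho ^^ (n mod 4)" unfolding e by (rule comp_id)
  finally show ?thesis .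
qed

lemma topes_zero:
  assumes om: "oriented_matroid L" and T: "T \<in> topes L" and R: "R \<in> topes L"
  shows "T e = Zero \<longleftrightarrow> R e = Zero"
proof -
  have *: "A e \<noteq> Zero" if A: "A \<in> topes L" and B: "B \<in> topes L" and "B e \<noteq> Zero" for A B
  proof
    assume z: "A e = Zero"
    have "comp_sv A B \<in> L" using om A B by (auto simp: oriented_matroid_def topes_def)
    moreover have "conf_le A (comp_sv A B)" by (auto simp: conf_le_def comp_sv_def)
    ultimately have "comp_sv A B = A" using A by (auto simp: topes_def)
    hence "comp_sv A B e = A e" by simp
    thus False using z that(3) by (simp add: comp_sv_def)
  qed
  show ?thesis using *[OF T R] *[OF R T] by blast
qed

lemma topes_neg:
  assumes om: "oriented_matroid L" and T: "T \<in> topes L"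
  shows "neg_sv T \<in> topes L"
proof -
  have "neg_sv T \<in> L" using om T by (auto simp: oriented_matroid_def topes_def)
  moreover have "Y = neg_sv T" if "Y \<in> L" "conf_le (neg_sv T) Y" for Y
  proof -
    have "neg_sv Y \<in> L" using om that(1) by (auto simp: oriented_matroid_def)
    moreover have "conf_le T (neg_sv Y)" using that(2)
      by (auto simp: conf_le_def neg_sv_def) (metis neg_sign.simps(3) neg_sign_inv)
    ultimately have "neg_sv Y = T" using T by (auto simp: topes_def)
    thus ?thesis by (metis neg_sv_inv)
  qed
  ultimately show ?thesis by (auto simp: topes_def)
qed

lemma rho_in:
  assumes "oriented_matroid L" "p \<in> tope_pairs L"
  shows "rho p \<in> tope_pairs L"
  using assms topes_neg by (auto simp: tope_pairs_def rho_def)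

lemma pt:
  fixes t r t' r' :: sign
  assumes z: "(t = Zero \<longleftrightarrow> r = Zero)" "(t = Zero \<longleftrightarrow> t' = Zero)" "(t = Zero \<longleftrightarrow> r' = Zero)"
    and h1: "t' = neg_sign t \<and> t' \<noteq> Zero \<longrightarrow> t' = neg_sign r \<and> t' \<noteq> Zero"
    and h2: "t' = neg_sign r \<and> t' \<noteq> Zero \<longrightarrow> t' = neg_sign r' \<and> t' \<noteq> Zero"
  shows "(neg_sign r = neg_sign (neg_sign r') \<and> neg_sign r \<noteq> Zero \<longrightarrow> neg_sign r = neg_sign t' \<and> neg_sign r \<noteq> Zero)
     \<and> (neg_sign r = neg_sign t' \<and> neg_sign r \<noteq> Zero \<longrightarrow> neg_sign r = neg_sign t \<and> neg_sign r \<noteq> Zero)"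
  using assms by (cases t; cases r; cases t'; cases r'; simp)

lemma rho_rev:
  assumes om: "oriented_matroid L" and p: "p \<in> tope_pairs L" and q: "q \<in> tope_pairs L"
    and le: "tp_le p q"
  shows "tp_le (rho q) (rho p)"
proof -
  obtain T R where pe: "p = (T, R)" by (cases p)
  obtain T' R' where qe: "q = (T', R')" by (cases q)
  have tp: "T \<in> topes L" "R \<in> topes L" "T' \<in> topes L" "R' \<in> topes L"
    using p q pe qe by (auto simp: tope_pairs_def)
  have le': "sep T' T \<subseteq> sep T' R" "sep T' R \<subseteq> sep T' R'"
    using le pe qe by (auto simp: tp_le_def tope_le_def)
  have P: "(neg_sign (R e) = neg_sign (neg_sign (R' e)) \<and> neg_sign (R e) \<noteq> Zero \<longrightarrow> neg_sign (R e) = neg_sign (T' e) \<and> neg_sign (R e) \<noteq> Zero)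
     \<and> (neg_sign (R e) = neg_sign (T' e) \<and> neg_sign (R e) \<noteq> Zero \<longrightarrow> neg_sign (R e) = neg_sign (T e) \<and> neg_sign (R e) \<noteq> Zero)" for e
  proof (rule pt)
    show "(T e = Zero \<longleftrightarrow> R e = Zero)" "(T e = Zero \<longleftrightarrow> T' e = Zero)" "(T e = Zero \<longleftrightarrow> R' e = Zero)"
      by (rule topes_zero[OF om tp(1) tp(2)], rule topes_zero[OF om tp(1) tp(3)],
          rule topes_zero[OF om tp(1) tp(4)])
    show "T' e = neg_sign (T e) \<and> T' e \<noteq> Zero \<longrightarrow> T' e = neg_sign (R e) \<and> T' e \<noteq> Zero"
      using le'(1) unfolding sep_def by blast
    show "T' e = neg_sign (R e) \<and> T' e \<noteq> Zero \<longrightarrow> T' e = neg_sign (R' e) \<and> T' e \<noteq> Zero"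
      using le'(2) unfolding sep_def by blast
  qed
  have "sep (neg_sv R) (neg_sv R') \<subseteq> sep (neg_sv R) T'" "sep (neg_sv R) T' \<subseteq> sep (neg_sv R) T"
  proof -
    show "sep (neg_sv R) (neg_sv R') \<subseteq> sep (neg_sv R) T'"
      unfolding sep_def neg_sv_def using P by blast
    show "sep (neg_sv R) T' \<subseteq> sep (neg_sv R) T"
      unfolding sep_def neg_sv_def using P by blast
  qed
  thus ?thesis using pe qe by (simp add: tp_le_def tope_le_def rho_def)
qed

lemma rho_rev_iff:
  assumes om: "oriented_matroid L" and p: "p \<in> tope_pairs L" and q: "q \<in> tope_pairs L"
  shows "tp_le (rho q) (rho p) \<longleftrightarrow> tp_le p q"
proof
  assume "tp_le p q" thus "tp_le (rho q) (rho p)" using rho_rev[OF om p q] by blast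
next
  assume a: "tp_le (rho q) (rho p)"
  have i: "\<And>x. x \<in> tope_pairs L \<Longrightarrow> rho x \<in> tope_pairs L" using rho_in[OF om] .
  have "tp_le (rho (rho p)) (rho (rho q))" using rho_rev[OF om i[OF q] i[OF p] a] .
  hence "tp_le (rho (rho (rho q))) (rho (rho (rho p)))" by (rule rho_rev[OF om i[OF i[OF p]] i[OF i[OF q]]])
  hence "tp_le (rho (rho (rho (rho p)))) (rho (rho (rho (rho q))))" by (rule rho_rev[OF om i[OF i[OF i[OF q]]] i[OF i[OF i[OF p]]]])
  moreover have e: "\<And>x. rho (rho (rho (rho x))) = x" by (simp add: rho_def)
  ultimately show "tp_le p q" by (simp only: e)
qed

lemma sa_comp:
  assumes "simplicial_automorphism V K f" "simplicial_automorphism V K g"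
  shows "simplicial_automorphism V K (f \<circ> g)"
proof -
  have bf: "bij_betw f V V" and hf: "\<And>S. S \<subseteq> V \<Longrightarrow> (S \<in> K \<longleftrightarrow> f ` S \<in> K)"
    using assms(1) unfolding simplicial_automorphism_def by blast+
  have bg: "bij_betw g V V" and hg: "\<And>S. S \<subseteq> V \<Longrightarrow> (S \<in> K \<longleftrightarrow> g ` S \<in> K)"
    using assms(2) unfolding simplicial_automorphism_def by blast+
  have "bij_betw (f \<circ> g) V V" using bg bf by (rule bij_betw_trans)
  moreover have "S \<in> K \<longleftrightarrow> (f \<circ> g) ` S \<in> K" if S: "S \<subseteq> V" for S
  proof -
    have "g ` S \<subseteq> V" using bg S unfolding bij_betw_def by blast
    thus ?thesis using hg[OF S] hf[of "g ` S"] by (simp add: image_comp)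
  qed
  ultimately show ?thesis unfolding simplicial_automorphism_def by blast
qed

lemma sa_id: "simplicial_automorphism V K id"
  by (simp add: simplicial_automorphism_def)

lemma sa_pow:
  assumes "simplicial_automorphism V K f"
  shows "simplicial_automorphism V K (f ^^ n)"
proof (induction n)
  case 0 thus ?case using sa_id by (metis funpow_0 id_apply ext)
next
  case (Suc n)
  from sa_comp[OF assms Suc.IH] show ?case by (simp only: funpow.simps(2))
qed

lemma sa_rho:
  assumes om: "oriented_matroid L"
  shows "simplicial_automorphism (tope_pairs L) (order_complex (tope_pairs L) tp_le) rho"
proof -
  let ?V = "tope_pairs L"
  define g where "g = (\<lambda>p::'a signvec \<times> 'a signvec. (snd p, neg_sv (fst p)))"
  have gV: "g p \<in> ?V" if "p \<in> ?V" for p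
    using that topes_neg[OF om] by (auto simp: g_def tope_pairs_def)
  have bij: "bij_betw rho ?V ?V"
  proof (rule bij_betw_byWitness[where f'=g])
    show "\<forall>a\<in>?V. g (rho a) = a" by (simp add: g_def rho_def)
    show "\<forall>a'\<in>?V. rho (g a') = a'" by (simp add: g_def rho_def)
    show "rho ` ?V \<subseteq> ?V" using rho_in[OF om] by blast
    show "g ` ?V \<subseteq> ?V" using gV by blast
  qed
  have inj: "inj_on rho ?V" using bij bij_betw_def by blast
  have "S \<in> order_complex ?V tp_le \<longleftrightarrow> rho ` S \<in> order_complex ?V tp_le" if S: "S \<subseteq> ?V" for S
  proof -
    have "rho ` S \<subseteq> ?V" using S rho_in[OF om] by blast
    moreover have "finite (rho ` S) \<longleftrightarrow> finite S"
      using inj S finite_image_iff inj_on_subset by blast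
    moreover have "(\<forall>x\<in>rho ` S. \<forall>y\<in>rho ` S. tp_le x y \<or> tp_le y x) \<longleftrightarrow>
                   (\<forall>x\<in>S. \<forall>y\<in>S. tp_le x y \<or> tp_le y x)"
    proof
      assume H: "\<forall>x\<in>rho ` S. \<forall>y\<in>rho ` S. tp_le x y \<or> tp_le y x"
      show "\<forall>x\<in>S. \<forall>y\<in>S. tp_le x y \<or> tp_le y x"
      proof (intro ballI)
        fix x y assume xy: "x \<in> S" "y \<in> S"
        hence "tp_le (rho x) (rho y) \<or> tp_le (rho y) (rho x)" using H by blast
        thus "tp_le x y \<or> tp_le y x"
          using rho_rev_iff[OF om, of x y] rho_rev_iff[OF om, of y x] xy S by blast
      qed
    next
      assume H: "\<forall>x\<in>S. \<forall>y\<in>S. tp_le x y \<or> tp_le y x"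
      show "\<forall>x\<in>rho ` S. \<forall>y\<in>rho ` S. tp_le x y \<or> tp_le y x"
      proof (intro ballI)
        fix x' y' assume "x' \<in> rho ` S" "y' \<in> rho ` S"
        then obtain x y where xy: "x \<in> S" "y \<in> S" "x' = rho x" "y' = rho y" by blast
        hence "tp_le x y \<or> tp_le y x" using H by blast
        thus "tp_le x' y' \<or> tp_le y' x'"
          using rho_rev_iff[OF om, of x y] rho_rev_iff[OF om, of y x] xy S by blast
      qed
    qed
    ultimately show ?thesis using S by (auto simp: order_complex_def)
  qed
  thus ?thesis using bij by (simp add: simplicial_automorphism_def)
qed

theorem theorem3p15:
  fixes L :: "('e::finite) signvec set"
  assumes "oriented_matroid L"
  shows "(\<forall>p\<in>tope_pairs L. (rho ^^ 4) p = p)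
       \<and> (\<forall>n::nat. \<forall>p\<in>tope_pairs L. rho_act (int n) p = (rho ^^ n) p)
       \<and> (\<forall>p\<in>tope_pairs L. rho_act 0 p = p)
       \<and> (\<forall>m n. \<forall>p\<in>tope_pairs L. rho_act (m + n) p = rho_act m (rho_act n p))
       \<and> (\<forall>n. simplicial_automorphism (tope_pairs L)
                (order_complex (tope_pairs L) tp_le) (rho_act n))"
proof (intro conjI allI ballI)
  fix p show "(rho ^^ 4) p = p" by (simp add: rho4)
next
  fix n :: nat and p
  have "nat (int n mod 4) = n mod 4" by (simp add: nat_mod_as_int)
  thus "rho_act (int n) p = (rho ^^ n) p" unfolding rho_act_def using rho_mod[of n] by metis
next
  fix p show "rho_act 0 p = p" by (simp add: rho_act_def)
next
  fix m n :: int and p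
  have "nat ((m + n) mod 4) = (nat (m mod 4) + nat (n mod 4)) mod 4"
  proof -
    have a: "0 \<le> m mod 4" "0 \<le> n mod 4" by simp_all
    have "(m + n) mod 4 = (m mod 4 + n mod 4) mod 4" by (rule mod_add_eq[symmetric])
    hence "nat ((m + n) mod 4) = nat (m mod 4 + n mod 4) mod nat 4"
      using a by (simp add: nat_mod_distrib)
    also have "\<dots> = (nat (m mod 4) + nat (n mod 4)) mod 4"
      using a by (simp add: nat_add_distrib)
    finally show ?thesis .
  qed
  hence E: "(rho ^^ nat ((m + n) mod 4)) = rho ^^ (nat (m mod 4) + nat (n mod 4))"
    using rho_mod[of "nat (m mod 4) + nat (n mod 4)"] by metis
  show "rho_act (m + n) p = rho_act m (rho_act n p)"
    unfolding rho_act_def using fun_cong[OF E[unfolded funpow_add]] by (simp only: comp_apply)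
next
  fix n :: int
  show "simplicial_automorphism (tope_pairs L) (order_complex (tope_pairs L) tp_le) (rho_act n)"
    unfolding rho_act_def by (rule sa_pow[OF sa_rho[OF assms]])
qed

end
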